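(* Let $G$ be a periodic group such that the set of primes dividing the orders of elements of $G$ is exactly $\{2,3\}$, for any two elements $g,h\in G$ of orders at most $4$ the order of $gh$ is at most $9$, and the centralizer of every involution of $G$ is a locally cyclic $2$-group. Fix an element $t\in G$ of order $4$, and let $\Theta=\{g^{-1}tg\mid g\in G\}$ and $\Theta^{-}=\{u^{-1}\mid u\in\Theta\}$. Then $\Theta\cap\Theta^{-}=\emptyset$ and $\Theta\cup\Theta^{-}=\Gamma_4(G)$.
   Context: $\Gamma_4(G)$ denotes the set of elements of $G$ of order exactly $4$. *)

theory Defs
  imports "HOL-Algebra.Algebra" "HOL-Computational_Algebra.Primes"
begin

definition centralizer_el :: "('a, 'b) monoid_scheme \<Rightarrow> 'a \<Rightarrow> 'a set" where
  "centralizer_el G x = {g \<in> carrier G. g \<otimes>\<^bsub>G\<^esub> x = x \<otimes>\<^bsub>G\<^esub> g}"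

definition locally_cyclic :: "('a, 'b) monoid_scheme \<Rightarrow> 'a set \<Rightarrow> bool" where
  "locally_cyclic G H \<longleftrightarrow>
     (\<forall>F. F \<subseteq> H \<and> finite F \<longrightarrow> cyclic_group (subgroup_generated G F))"

definition is_2_group :: "('a, 'b) monoid_scheme \<Rightarrow> 'a set \<Rightarrow> bool" where
  "is_2_group G H \<longleftrightarrow> (\<forall>h\<in>H. \<exists>k::nat. group.ord G h = 2 ^ k)"

definition Gamma4 :: "('a, 'b) monoid_scheme \<Rightarrow> 'a set" where
  "Gamma4 G = {x \<in> carrier G. group.ord G x = 4}"

end

theory Submission
  imports Defs
begin

lemma int_dvd_aux:
  fixes m p q :: int
  assumes "m dvd 2 * p" "\<not> m dvd p" "m dvd 2 * q" "\<not> m dvd q"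
  shows "m dvd q - p"
proof -
  obtain r where r: "2 * p = m * r" using assms(1) by (auto elim: dvdE)
  obtain s where s: "2 * q = m * s" using assms(3) by (auto elim: dvdE)
  have "odd r"
  proof
    assume "even r" then obtain c1 :: int where "r = 2 * c1" by auto
    with r have "2 * p = 2 * (m * c1)" by (simp add: algebra_simps)
    then have "p = m * c1" by linarith
    with assms(2) show False by simp
  qed
  have "odd s"
  proof
    assume "even s" then obtain c2 :: int where "s = 2 * c2" by auto
    with s have "2 * q = 2 * (m * c2)" by (simp add: algebra_simps)
    then have "q = m * c2" by linarith
    with assms(4) show False by simp
  qed
  then have "even (s - r)" using \<open>odd r\<close> by simp
  then obtain e where e: "s - r = 2 * e" by (elim evenE)
  have "2 * (q-p) = m * (s-r)" using r s by (simp add: algebra_simps)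
  then have "2 * (q - p) = 2 * (m * e)" using e by (simp add: algebra_simps)
  then have "q - p = m * e" by simp
  then show ?thesis by simp
qed

context group
begin

lemma cancel1 [simp]: "x \<in> carrier G \<Longrightarrow> y \<in> carrier G \<Longrightarrow> x \<otimes> (inv x \<otimes> y) = y"
  by (simp add: m_assoc[symmetric])

lemma cancel2 [simp]: "x \<in> carrier G \<Longrightarrow> y \<in> carrier G \<Longrightarrow> inv x \<otimes> (x \<otimes> y) = y"
  by (simp add: m_assoc[symmetric])

lemma pow2: "x \<in> carrier G \<Longrightarrow> x [^] (2::nat) = x \<otimes> x"
  by (simp add: numeral_2_eq_2)

lemma cyc_powers:
  assumes "F \<subseteq> carrier G" "cyclic_group (subgroup_generated G F)"
  shows "\<exists>a\<in>carrier G. \<forall>y\<in>F. \<exists>n::int. y = a [^] n"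
proof -
  let ?H = "subgroup_generated G F"
  obtain x where x: "x \<in> carrier ?H" "carrier ?H = range (\<lambda>n::int. x [^]\<^bsub>?H\<^esub> n)"
    using group.cyclic_group[OF group_subgroup_generated] assms(2) by blast
  have xG: "x \<in> carrier G" using x(1) carrier_subgroup_generated_subset by blast
  have FH: "F \<subseteq> carrier ?H" using assms(1) by (auto simp: carrier_subgroup_generated intro: generate.incl)
  show ?thesis
  proof (intro bexI[OF _ xG] ballI)
    fix y assume "y \<in> F"
    then have "y \<in> range (\<lambda>n::int. x [^]\<^bsub>?H\<^esub> n)" using FH x(2) by auto
    then obtain n :: int where "y = x [^]\<^bsub>?H\<^esub> n" by auto
    then show "\<exists>n::int. y = x [^] n" using int_pow_subgroup_generated[OF x(1), of n] by blast
  qed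
qed

lemma uniq_invol:
  assumes a: "a \<in> carrier G" "ord a > 0"
    and yz: "y = a [^] (p::int)" "z = a [^] (q::int)" "y \<otimes> y = \<one>" "z \<otimes> z = \<one>" "y \<noteq> \<one>" "z \<noteq> \<one>"
  shows "y = z"
proof -
  let ?m = "int (ord a)"
  have e1: "a [^] (p + p) = \<one>" using yz(1,3) int_pow_mult[OF a(1), of p p] by simp
  have "?m dvd p + p" using iffD1[OF int_pow_eq_id[OF a(1)] e1] .
  then have d1: "?m dvd 2 * p" by (simp only: mult_2)
  have e2: "a [^] (q + q) = \<one>" using yz(2,4) int_pow_mult[OF a(1), of q q] by simp
  have "?m dvd q + q" using iffD1[OF int_pow_eq_id[OF a(1)] e2] .
  then have d2: "?m dvd 2 * q" by (simp only: mult_2)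
  have n1: "\<not> ?m dvd p"
  proof
    assume "?m dvd p" then have "a [^] p = \<one>" using iffD2[OF int_pow_eq_id[OF a(1)]] by blast
    with yz(1,5) show False by simp
  qed
  have n2: "\<not> ?m dvd q"
  proof
    assume "?m dvd q" then have "a [^] q = \<one>" using iffD2[OF int_pow_eq_id[OF a(1)]] by blast
    with yz(2,6) show False by simp
  qed
  have "?m dvd q - p" using int_dvd_aux[OF d1 n1 d2 n2] .
  then have "a [^] p = a [^] q" using iffD2[OF int_pow_eq[OF a(1)]] by blast
  then show ?thesis using yz(1,2) by simp
qed

lemma conj_pow: "g \<in> carrier G \<Longrightarrow> x \<in> carrier G \<Longrightarrow> (inv g \<otimes> x \<otimes> g) [^] (n::nat) = inv g \<otimes> x [^] n \<otimes> g"
  by (induction n) (simp_all add: m_assoc)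

lemma conj_one: "g \<in> carrier G \<Longrightarrow> y \<in> carrier G \<Longrightarrow> (inv g \<otimes> y \<otimes> g = \<one>) = (y = \<one>)"
proof
  assume g: "g \<in> carrier G" "y \<in> carrier G" and "inv g \<otimes> y \<otimes> g = \<one>"
  then have "g \<otimes> (inv g \<otimes> y \<otimes> g) \<otimes> inv g = g \<otimes> inv g" by simp
  then show "y = \<one>" using g by (simp add: m_assoc)
qed simp

lemma ord_conj: "g \<in> carrier G \<Longrightarrow> x \<in> carrier G \<Longrightarrow> ord (inv g \<otimes> x \<otimes> g) = ord x"
  by (simp add: ord_unique conj_pow conj_one pow_eq_id)

lemma swap_pow: "x \<in> carrier G \<Longrightarrow> w \<in> carrier G \<Longrightarrow> v \<in> carrier G \<Longrightarrow> x \<otimes> w = v \<otimes> x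
   \<Longrightarrow> x \<otimes> w [^] (k::nat) = v [^] k \<otimes> x"
proof (induction k)
  case (Suc k)
  have "x \<otimes> w [^] Suc k = (x \<otimes> w [^] k) \<otimes> w" using Suc.prems by (simp add: m_assoc)
  also have "\<dots> = v [^] k \<otimes> (x \<otimes> w)" using Suc by (simp add: m_assoc)
  also have "\<dots> = v [^] Suc k \<otimes> x" using Suc.prems by (simp add: m_assoc)
  finally show ?case .
qed simp

lemma invol_inv: "x \<in> carrier G \<Longrightarrow> x \<otimes> x = \<one> \<Longrightarrow> inv x = x"
  using inv_equality by blast


lemma from_invol:
  assumes invol: "\<forall>i\<in>carrier G. ord i = 2 \<longrightarrow>
                  locally_cyclic G (centralizer_el G i) \<and> is_2_group G (centralizer_el G i)"
    and z: "z \<in> carrier G" "ord z = 2"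
    and xy: "x \<in> carrier G" "y \<in> carrier G" "x \<otimes> z = z \<otimes> x" "y \<otimes> z = z \<otimes> y"
  shows "\<exists>a\<in>carrier G. \<exists>(p::int) (q::int). x = a [^] p \<and> y = a [^] q"
proof -
  have lc: "locally_cyclic G (centralizer_el G z)" using invol z by blast
  have sub: "{x, y} \<subseteq> centralizer_el G z" using xy by (auto simp: centralizer_el_def)
  have "cyclic_group (subgroup_generated G {x, y})" using lc sub unfolding locally_cyclic_def by blast
  then obtain a where a: "a \<in> carrier G" "\<forall>v\<in>{x, y}. \<exists>n::int. v = a [^] n"
    using cyc_powers[of "{x, y}"] xy(1,2) by auto
  from a(2) obtain p q :: int where pq: "x = a [^] p" "y = a [^] q" by auto
  show ?thesis
    apply (rule bexI[OF _ a(1)])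
    apply (rule exI[of _ p])
    apply (rule exI[of _ q])
    using pq by simp
qed

lemma pow_comm: "a \<in> carrier G \<Longrightarrow> a [^] (p::int) \<otimes> a [^] (q::int) = a [^] q \<otimes> a [^] p"
  by (metis int_pow_mult add.commute)

end

theorem lemma5:
  fixes G (structure) and t :: 'a
  assumes grp: "group G"
    and periodic: "\<forall>x\<in>carrier G. group.ord G x > 0"
    and primes: "{p::nat. Factorial_Ring.prime p \<and> (\<exists>x\<in>carrier G. p dvd group.ord G x)} = {2, 3}"
    and prod_ord: "\<forall>g\<in>carrier G. \<forall>h\<in>carrier G.
                     group.ord G g \<le> 4 \<and> group.ord G h \<le> 4 \<longrightarrow> group.ord G (g \<otimes> h) \<le> 9"
    and invol: "\<forall>i\<in>carrier G. group.ord G i = 2 \<longrightarrow>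
                  locally_cyclic G (centralizer_el G i) \<and> is_2_group G (centralizer_el G i)"
    and t: "t \<in> carrier G" "group.ord G t = 4"
  defines "Theta \<equiv> {inv g \<otimes> t \<otimes> g | g. g \<in> carrier G}"
  shows "Theta \<inter> (\<lambda>u. inv u) ` Theta = {} \<and> Theta \<union> (\<lambda>u. inv u) ` Theta = Gamma4 G"
proof -
  interpret group G by (rule grp)
  have tG: "t \<in> carrier G" and ot: "ord t = 4" using t by auto
  have per: "\<And>x. x \<in> carrier G \<Longrightarrow> ord x > 0" using periodic by blast
  have sq: "ord (u \<otimes> u) = 2 \<and> (u \<otimes> u) \<otimes> (u \<otimes> u) = \<one> \<and> u \<otimes> u \<noteq> \<one>"
    if uG: "u \<in> carrier G" and ou: "ord u = 4" for u
  proof -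
    have o2: "ord (u \<otimes> u) = 2" using ord_pow[OF uG, of 2] ou pow2[OF uG] by simp
    have "u [^] (4::nat) = (u \<otimes> u) \<otimes> (u \<otimes> u)" using uG by (simp add: numeral_eq_Suc m_assoc)
    moreover have "u [^] (4::nat) = \<one>" using pow_ord_eq_1[OF uG] ou by simp
    moreover have "u \<otimes> u \<noteq> \<one>" using o2 ord_eq_1[of "u \<otimes> u"] uG by auto
    ultimately show ?thesis using o2 by simp
  qed
  define i where "i = t \<otimes> t"
  have iG: "i \<in> carrier G" unfolding i_def using tG by simp
  have oi: "ord i = 2" and ii: "i \<otimes> i = \<one>" and i1: "i \<noteq> \<one>" using sq[OF tG ot] unfolding i_def by auto
  have inv_i: "inv i = i" using invol_inv[OF iG ii] .
  have A: "Theta \<inter> (\<lambda>u. inv u) ` Theta = {}"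
  proof (rule ccontr)
    assume "Theta \<inter> (\<lambda>u. inv u) ` Theta \<noteq> {}"
    then obtain x where "x \<in> Theta" "x \<in> (\<lambda>u. inv u) ` Theta" by blast
    then obtain g h where gh: "g \<in> carrier G" "h \<in> carrier G" "x = inv g \<otimes> t \<otimes> g"
        "x = inv (inv h \<otimes> t \<otimes> h)"
      unfolding Theta_def by auto
    have "inv (inv h \<otimes> t \<otimes> h) = inv h \<otimes> inv t \<otimes> h"
      using gh tG by (simp add: inv_mult_group m_assoc)
    then have E: "inv g \<otimes> t \<otimes> g = inv h \<otimes> inv t \<otimes> h" using gh by simp
    define k where "k = g \<otimes> inv h"
    have kG: "k \<in> carrier G" unfolding k_def using gh by simp
    have "g \<otimes> (inv g \<otimes> t \<otimes> g) \<otimes> inv h = g \<otimes> (inv h \<otimes> inv t \<otimes> h) \<otimes> inv h" using E by simp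
    then have tk: "t \<otimes> k = k \<otimes> inv t" using gh tG by (simp add: k_def m_assoc)
    have "i \<otimes> k = t \<otimes> (t \<otimes> k)" unfolding i_def using tG kG by (simp add: m_assoc)
    also have "\<dots> = k \<otimes> (inv t \<otimes> inv t)" using tk tG kG by (metis m_assoc inv_closed)
    also have "inv t \<otimes> inv t = inv i" unfolding i_def using tG by (simp add: inv_mult_group)
    also have "inv i = i" by (rule inv_i)
    finally have ik: "i \<otimes> k = k \<otimes> i" .
    have it: "t \<otimes> i = i \<otimes> t" unfolding i_def using tG by (simp add: m_assoc)
    obtain a p q where a: "a \<in> carrier G" "k = a [^] (p::int)" "t = a [^] (q::int)"
      using from_invol[OF invol iG oi kG tG ik[symmetric] it] by blast
    have "k \<otimes> t = t \<otimes> k" using a pow_comm by simp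
    then have "k \<otimes> t = k \<otimes> inv t" using tk by simp
    then have "t = inv t" using kG tG by simp
    then have "i = \<one>" unfolding i_def using tG by (metis r_inv)
    with i1 show False by simp
  qed
  have B: "Theta \<union> (\<lambda>u. inv u) ` Theta \<subseteq> Gamma4 G"
  proof -
    have "x \<in> carrier G \<and> ord x = 4" if "x \<in> Theta" for x
      using that tG ot ord_conj unfolding Theta_def by auto
    then show ?thesis unfolding Gamma4_def by auto
  qed
  have C: "Gamma4 G \<subseteq> Theta \<union> (\<lambda>u. inv u) ` Theta"
  proof
    fix u assume "u \<in> Gamma4 G"
    then have uG: "u \<in> carrier G" and ou: "ord u = 4" unfolding Gamma4_def by auto
    define j where "j = u \<otimes> u"
    have jG: "j \<in> carrier G" unfolding j_def using uG by simp
    have oj: "ord j = 2" and jj: "j \<otimes> j = \<one>" and j1: "j \<noteq> \<one>" using sq[OF uG ou] unfolding j_def by auto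
    have inv_j: "inv j = j" using invol_inv[OF jG jj] .
    define w where "w = i \<otimes> j"
    have wG: "w \<in> carrier G" unfolding w_def using iG jG by simp
    have inv_w: "inv w = j \<otimes> i" unfolding w_def using iG jG inv_i inv_j by (simp add: inv_mult_group)
    have iw: "i \<otimes> w = inv w \<otimes> i"
    proof -
      have "i \<otimes> w = j" unfolding w_def using iG jG ii by (simp add: m_assoc[symmetric])
      moreover have "inv w \<otimes> i = j" unfolding inv_w using iG jG ii by (simp add: m_assoc)
      ultimately show ?thesis by simp
    qed
    have jw: "j \<otimes> w = inv w \<otimes> j" using inv_w iG jG unfolding w_def by (simp add: m_assoc)
    define n where "n = ord w"
    have n0: "n > 0" unfolding n_def using per[OF wG] .
    have "odd n"
    proof
      assume "even n"
      then obtain k where k: "n = 2 * k" by (elim evenE)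
      have k0: "k > 0" using k n0 by simp
      define z where "z = w [^] k"
      have zG: "z \<in> carrier G" unfolding z_def using wG by simp
      have wn: "w [^] n = \<one>" using pow_ord_eq_1[OF wG] n_def by simp
      have zz: "z \<otimes> z = \<one>" unfolding z_def using wG k wn
        by (simp add: nat_pow_mult mult_2[symmetric])
      have oz: "ord z = 2" unfolding z_def using ord_pow[OF wG, of k] k k0 n_def by simp
      have inv_z: "inv z = z" using invol_inv[OF zG zz] .
      have iz: "i \<otimes> z = z \<otimes> i"
        using swap_pow[OF iG wG inv_closed[OF wG] iw, of k] wG inv_z unfolding z_def
        by (simp add: nat_pow_inv)
      have jz: "j \<otimes> z = z \<otimes> j"
        using swap_pow[OF jG wG inv_closed[OF wG] jw, of k] wG inv_z unfolding z_def
        by (simp add: nat_pow_inv)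
      obtain a p q where a: "a \<in> carrier G" "i = a [^] (p::int)" "j = a [^] (q::int)"
        using from_invol[OF invol zG oz iG jG iz jz] by blast
      have "i = j" using uniq_invol[OF a(1) per[OF a(1)] a(2) a(3) ii jj i1 j1] .
      then have "w = \<one>" unfolding w_def using ii by simp
      then have "n = 1" unfolding n_def by simp
      with \<open>even n\<close> show False by simp
    qed
    then obtain k where k: "n = 2 * k + 1" by (elim oddE)
    define g where "g = w [^] (k + 1)"
    have gG: "g \<in> carrier G" unfolding g_def using wG by simp
    have gg: "g \<otimes> g = w"
    proof -
      have e: "(k + 1) + (k + 1) = Suc n" using k by simp
      have "g \<otimes> g = w [^] ((k + 1) + (k + 1))" unfolding g_def by (rule nat_pow_mult[OF wG])
      also have "\<dots> = w [^] (Suc n)" by (simp only: e)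
      also have "\<dots> = w" using wG n_def by simp
      finally show ?thesis .
    qed
    have ig: "i \<otimes> g = inv g \<otimes> i"
      unfolding g_def using swap_pow[OF iG wG inv_closed[OF wG] iw, of "k+1"]
      by (simp only: nat_pow_inv[OF wG])
    have cj: "inv g \<otimes> i \<otimes> g = j"
    proof -
      have "inv g \<otimes> i \<otimes> g = i \<otimes> (g \<otimes> g)" using ig iG gG by (simp add: m_assoc[symmetric])
      also have "\<dots> = j" unfolding gg w_def using iG jG ii by (simp add: m_assoc[symmetric])
      finally show ?thesis .
    qed
    define s where "s = inv g \<otimes> t \<otimes> g"
    have sG: "s \<in> carrier G" unfolding s_def using gG tG by simp
    have sTh: "s \<in> Theta" unfolding Theta_def s_def using gG by blast
    have ss: "s \<otimes> s = j"
    proof -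
      have "s \<otimes> s = s [^] (2::nat)" using pow2[OF sG] by simp
      also have "\<dots> = inv g \<otimes> i \<otimes> g" unfolding s_def i_def using conj_pow[OF gG tG, of 2] pow2[OF tG] by simp
      finally show ?thesis using cj by simp
    qed
    have sj: "s \<otimes> j = j \<otimes> s" unfolding ss[symmetric] using sG by (simp add: m_assoc)
    have uj: "u \<otimes> j = j \<otimes> u" unfolding j_def using uG by (simp add: m_assoc)
    obtain a p q where a: "a \<in> carrier G" "s = a [^] (p::int)" "u = a [^] (q::int)"
      using from_invol[OF invol jG oj sG uG sj uj] by blast
    define x where "x = u \<otimes> inv s"
    have xa: "x = a [^] (q + - p)" unfolding x_def a(2,3) using a(1) by (simp only: int_pow_mult int_pow_neg)
    have xx: "x \<otimes> x = \<one>"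
    proof -
      have "x \<otimes> x = a [^] ((q + q) + - (p + p))" unfolding xa using a(1)
        by (simp add: int_pow_mult[symmetric] algebra_simps)
      also have "\<dots> = (u \<otimes> u) \<otimes> inv (s \<otimes> s)" using a by (simp only: int_pow_mult int_pow_neg)
      also have "\<dots> = \<one>" using ss j_def jG by simp
      finally show ?thesis .
    qed
    show "u \<in> Theta \<union> (\<lambda>u. inv u) ` Theta"
    proof (cases "x = \<one>")
      case True
      have "u = (u \<otimes> inv s) \<otimes> s" using uG sG by (simp add: m_assoc)
      then have "u = s" using True sG unfolding x_def by simp
      then show ?thesis using sTh by simp
    next
      case False
      have "a [^] (q + q) = j" unfolding j_def a(3) using a(1) by (simp only: int_pow_mult)
      then have "x = j" using uniq_invol[OF a(1) per[OF a(1)] xa _ xx jj False j1] by metis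
      then have "u \<otimes> inv s = u \<otimes> u" unfolding x_def j_def .
      then have "inv s = u" using uG sG by simp
      then show ?thesis using sTh by blast
    qed
  qed
  show ?thesis using A B C by blast
qed

end
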